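(* Let $n\ge 3$ and consider $H^{(3)}(t)=H^{(2)}(t)+\sum_{i<j<k}a^{(3)}_{ijk}(t)Z_iZ_jZ_k$, $0\le t\le T$, where $H^{(2)}(t)$ is at every time U(1)-invariant and 2-local and the $a^{(3)}_{ijk}$ are real piecewise-continuous functions. Then $$\beta_3=\Delta_3=-8\int_0^T\sum_{i<j<k}a^{(3)}_{ijk}(t)\,dt\pmod{2\pi},$$ where $\beta_3=\binom{n}{3}\theta_0-\binom{n-1}{2}\theta_1+(n-2)\theta_2-\theta_3\pmod{2\pi}$.
   Context: Qubits $1,\dots,n$, Hilbert space $(\mathbb{C}^2)^{\otimes n}$, $Z_j$ the Pauli $Z$ on qubit $j$. An operator is 2-local if it is a sum of terms each acting non-trivially on at most 2 qubits. For $m=0,\dots,n$, $\Pi_m$ is the projector onto the span of computational basis states with exactly $m$ qubits in state $|1\rangle$. A Hamiltonian is U(1)-invariant if it commutes with $\sum_j Z_j$. For such $H(t)$, $V=\mathcal{T}\exp(-i\int_0^TH(t)dt)$ (time-ordered exponential) satisfies $V=\bigoplus_mV_m$ with $V_m$ the restriction of $V$ to the range of $\Pi_m$; $\theta_m=\arg\det(V_m)\in(-\pi,\pi]$, and $\Delta_3=\theta_{n-1}-\theta_1-(n-2)(\theta_n-\theta_0)\pmod{2\pi}$. *)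

theory Defs
  imports "HOL-Analysis.Analysis"
begin

text \<open>Operators on n qubits are complex matrices indexed by computational basis states
  x < 2^n; bit j of x (j < n) is the state of qubit j+1. Matrices: nat => nat => complex.\<close>

type_synonym op = "nat \<Rightarrow> nat \<Rightarrow> complex"

definition dimq :: "nat \<Rightarrow> nat" where "dimq n = 2 ^ n"

definition op_mult :: "nat \<Rightarrow> op \<Rightarrow> op \<Rightarrow> op" where
  "op_mult n A B = (\<lambda>x y. \<Sum>k<dimq n. A x k * B k y)"

definition op_id :: op where "op_id = (\<lambda>x y. if x = y then 1 else 0)"

definition pauliZ :: "nat \<Rightarrow> op" where
  "pauliZ j = (\<lambda>x y. if x = y then (if bit x j then -1 else 1) else 0)"

definition totalZ :: "nat \<Rightarrow> op" where
  "totalZ n = (\<lambda>x y. \<Sum>j<n. pauliZ j x y)"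

definition weight :: "nat \<Rightarrow> nat \<Rightarrow> nat" where
  "weight n x = card {j. j < n \<and> bit x j}"

text \<open>Basis states spanning the range of Pi_m.\<close>
definition sector :: "nat \<Rightarrow> nat \<Rightarrow> nat set" where
  "sector n m = {x. x < dimq n \<and> weight n x = m}"

definition hermitian_op :: "nat \<Rightarrow> op \<Rightarrow> bool" where
  "hermitian_op n H \<longleftrightarrow> (\<forall>x<dimq n. \<forall>y<dimq n. H x y = cnj (H y x))"

definition u1_invariant :: "nat \<Rightarrow> op \<Rightarrow> bool" where
  "u1_invariant n H \<longleftrightarrow>
     (\<forall>x<dimq n. \<forall>y<dimq n. op_mult n H (totalZ n) x y = op_mult n (totalZ n) H x y)"

text \<open>A acts non-trivially only on the qubits in S (i.e. A = A_S \<otimes> Id on the complement).\<close>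
definition acts_only_on :: "nat \<Rightarrow> nat set \<Rightarrow> op \<Rightarrow> bool" where
  "acts_only_on n S A \<longleftrightarrow>
     (\<forall>x<dimq n. \<forall>y<dimq n. (\<exists>j<n. j \<notin> S \<and> bit x j \<noteq> bit y j) \<longrightarrow> A x y = 0) \<and>
     (\<forall>x<dimq n. \<forall>y<dimq n. \<forall>x'<dimq n. \<forall>y'<dimq n.
        (\<forall>j<n. j \<notin> S \<longrightarrow> bit x j = bit y j) \<and> (\<forall>j<n. j \<notin> S \<longrightarrow> bit x' j = bit y' j) \<and>
        (\<forall>j\<in>S. bit x j = bit x' j \<and> bit y j = bit y' j) \<longrightarrow> A x y = A x' y')"

definition two_local :: "nat \<Rightarrow> op \<Rightarrow> bool" where
  "two_local n H \<longleftrightarrow>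
     (\<exists>A. (\<forall>S. acts_only_on n S (A S)) \<and>
          (\<forall>x<dimq n. \<forall>y<dimq n.
             H x y = (\<Sum>S\<in>{S. S \<subseteq> {..<n} \<and> card S \<le> 2}. A S x y)))"

definition piecewise_continuous_on :: "real \<Rightarrow> real \<Rightarrow> (real \<Rightarrow> 'a::real_normed_vector) \<Rightarrow> bool" where
  "piecewise_continuous_on a b f \<longleftrightarrow>
     (\<exists>D. finite D \<and> continuous_on ({a..b} - D) f \<and>
        (\<forall>x\<in>D. (\<exists>l. (f \<longlongrightarrow> l) (at x within {a..<x})) \<and>
                (\<exists>l. (f \<longlongrightarrow> l) (at x within {x<..b}))))"

definition time_ordered_exp :: "nat \<Rightarrow> real \<Rightarrow> (real \<Rightarrow> op) \<Rightarrow> (real \<Rightarrow> op) \<Rightarrow> bool" where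
  "time_ordered_exp n T H V \<longleftrightarrow>
     (\<forall>x<dimq n. \<forall>y<dimq n. continuous_on {0..T} (\<lambda>t. V t x y)) \<and>
     (\<forall>t\<in>{0..T}. \<forall>x<dimq n. \<forall>y<dimq n.
        \<exists>I. ((\<lambda>s. op_mult n (H s) (V s) x y) has_integral I) {0..t} \<and>
            V t x y = op_id x y - \<i> * I)"

definition det_on :: "nat set \<Rightarrow> op \<Rightarrow> complex" where
  "det_on B A = (\<Sum>p\<in>{p. p permutes B}. of_int (sign p) * (\<Prod>i\<in>B. A i (p i)))"

definition theta :: "nat \<Rightarrow> op \<Rightarrow> nat \<Rightarrow> real" where
  "theta n V m = Arg (det_on (sector n m) V)"

definition cong_2pi :: "real \<Rightarrow> real \<Rightarrow> bool" where
  "cong_2pi a b \<longleftrightarrow> (\<exists>k::int. a - b = 2 * pi * of_int k)"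

definition Delta3 :: "nat \<Rightarrow> op \<Rightarrow> real" where
  "Delta3 n V = theta n V (n - 1) - theta n V 1 - (real n - 2) * (theta n V n - theta n V 0)"

definition beta3 :: "nat \<Rightarrow> op \<Rightarrow> real" where
  "beta3 n V = real (n choose 3) * theta n V 0 - real ((n - 1) choose 2) * theta n V 1
              + (real n - 2) * theta n V 2 - theta n V 3"

definition H3 :: "nat \<Rightarrow> (real \<Rightarrow> op) \<Rightarrow> (nat \<Rightarrow> nat \<Rightarrow> nat \<Rightarrow> real \<Rightarrow> real) \<Rightarrow> real \<Rightarrow> op" where
  "H3 n H2 a t = (\<lambda>x y. H2 t x y +
     (\<Sum>(i,j,k)\<in>{(i,j,k). i < j \<and> j < k \<and> k < n}.
        complex_of_real (a i j k t) *
        op_mult n (pauliZ i) (op_mult n (pauliZ j) (pauliZ k)) x y))"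

end

theory Submission
  imports Defs
begin
lemma pc_bounded:
  fixes f :: "real \<Rightarrow> 'b::real_normed_vector"
  assumes "finite D" and cont: "continuous_on ({a..b} - D) f"
    and lim: "\<forall>x\<in>D. (\<exists>l. (f \<longlongrightarrow> l) (at x within {a..<x})) \<and> (\<exists>l. (f \<longlongrightarrow> l) (at x within {x<..b}))"
  shows "\<exists>B. \<forall>y\<in>{a..b} - D. norm (f y) \<le> B"
proof -
  have loc: "\<exists>d>0. \<exists>B. \<forall>y\<in>{a..b} - D. dist y x < d \<longrightarrow> norm (f y) \<le> B" if x: "x \<in> {a..b}" for x
  proof (cases "x \<in> D")
    case False
    with x cont obtain d where d: "d>0" "\<forall>y\<in>{a..b} - D. dist y x < d \<longrightarrow> dist (f y) (f x) < 1"
      unfolding continuous_on_iff by (metis DiffI zero_less_one)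
    have "\<forall>y\<in>{a..b} - D. dist y x < d \<longrightarrow> norm (f y) \<le> norm (f x) + 1"
      using d(2) by (metis dist_norm add.commute less_imp_le norm_triangle_sub order_trans add_le_cancel_left norm_minus_commute)
    then show ?thesis using d(1) by blast
  next
    case True
    with lim obtain l1 l2 where l1: "(f \<longlongrightarrow> l1) (at x within {a..<x})"
      and l2: "(f \<longlongrightarrow> l2) (at x within {x<..b})" by blast
    obtain d1 where d1: "d1>0" "\<forall>y\<in>{a..<x}. y \<noteq> x \<and> dist y x < d1 \<longrightarrow> dist (f y) l1 < 1"
      using l1 unfolding tendsto_iff eventually_at by (metis zero_less_one)
    obtain d2 where d2: "d2>0" "\<forall>y\<in>{x<..b}. y \<noteq> x \<and> dist y x < d2 \<longrightarrow> dist (f y) l2 < 1"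
      using l2 unfolding tendsto_iff eventually_at by (metis zero_less_one)
    have "\<forall>y\<in>{a..b} - D. dist y x < min d1 d2 \<longrightarrow> norm (f y) \<le> max (norm l1) (norm l2) + 1"
    proof (intro ballI impI)
      fix y assume y: "y \<in> {a..b} - D" "dist y x < min d1 d2"
      then have "y \<noteq> x" using True by auto
      then have "y < x \<or> x < y" by auto
      then show "norm (f y) \<le> max (norm l1) (norm l2) + 1"
      proof
        assume "y < x"
        then have "dist (f y) l1 < 1" using d1(2) y \<open>y\<noteq>x\<close> by auto
        then show ?thesis by (smt (verit) dist_norm norm_triangle_sub)
      next
        assume "x < y"
        then have "dist (f y) l2 < 1" using d2(2) y \<open>y\<noteq>x\<close> by auto
        then show ?thesis by (smt (verit) dist_norm norm_triangle_sub)
      qed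
    qed
    then show ?thesis using d1 d2 by (metis min_less_iff_conj)
  qed
  then obtain d B where dB: "\<And>x. x \<in> {a..b} \<Longrightarrow> d x > 0 \<and> (\<forall>y\<in>{a..b} - D. dist y x < d x \<longrightarrow> norm (f y) \<le> B x)"
    by metis
  have "compact {a..b}" by simp
  then obtain K where K: "K \<subseteq> {a..b}" "finite K" "{a..b} \<subseteq> (\<Union>x\<in>K. ball x (d x))"
  proof (rule compactE_image)
    show "\<And>x. x \<in> {a..b} \<Longrightarrow> open (ball x (d x))" by simp
    show "{a..b} \<subseteq> (\<Union>x\<in>{a..b}. ball x (d x))" using dB by force
  qed blast
  have "\<forall>y\<in>{a..b} - D. norm (f y) \<le> (\<Sum>x\<in>K. \<bar>B x\<bar>)"
  proof
    fix y assume y: "y \<in> {a..b} - D"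
    then obtain x where x: "x \<in> K" "y \<in> ball x (d x)" using K by blast
    then have "norm (f y) \<le> B x" using dB[of x] K y by (auto simp: dist_commute)
    also have "\<dots> \<le> \<bar>B x\<bar>" by simp
    also have "\<dots> \<le> (\<Sum>x\<in>K. \<bar>B x\<bar>)" using x K by (intro member_le_sum) auto
    finally show "norm (f y) \<le> (\<Sum>x\<in>K. \<bar>B x\<bar>)" .
  qed
  then show ?thesis by blast
qed

lemma pc_integrable:
  fixes f :: "real \<Rightarrow> 'b::euclidean_space"
  assumes "piecewise_continuous_on a b f"
  shows "f integrable_on {a..b}"
proof -
  obtain D where D: "finite D" "continuous_on ({a..b} - D) f"
    "\<forall>x\<in>D. (\<exists>l. (f \<longlongrightarrow> l) (at x within {a..<x})) \<and> (\<exists>l. (f \<longlongrightarrow> l) (at x within {x<..b}))"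
    using assms unfolding piecewise_continuous_on_def by blast
  obtain B where B: "\<forall>y\<in>{a..b} - D. norm (f y) \<le> B" using pc_bounded[OF D] by blast
  have S: "{a..b} - D \<in> sets lebesgue"
    using D(1) by (intro sets.Diff) (auto intro: negligible_imp_sets negligible_finite)
  have "f integrable_on ({a..b} - D)"
  proof (rule measurable_bounded_by_integrable_imp_integrable[OF _ _ _ S])
    show "f \<in> borel_measurable (lebesgue_on ({a..b} - D))"
      by (rule continuous_imp_measurable_on_sets_lebesgue[OF D(2) S])
    show "(\<lambda>x. B) integrable_on ({a..b} - D)"
      by (rule integrable_spike_set[of _ "{a..b}"]) (auto intro: negligible_subset[OF negligible_finite[OF D(1)]])
    show "\<And>x. x \<in> {a..b} - D \<Longrightarrow> norm (f x) \<le> B" using B by blast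
  qed
  then show ?thesis
    by (rule integrable_spike_set) (auto intro: negligible_subset[OF negligible_finite[OF D(1)]])
qed

lemma det_on_identical_rows:
  assumes B: "finite B" and il: "i \<in> B" "l \<in> B" "i \<noteq> l" and M: "M i = M l"
  shows "det_on B M = 0"
proof -
  let ?t = "Transposition.transpose i l"
  let ?P = "{p. p permutes B}"
  let ?F = "\<lambda>p. of_int (sign p) * (\<Prod>j\<in>B. M j (p j)) :: complex"
  have tp: "?t permutes B" using il by (simp add: permutes_swap_id)
  have F: "?F (p \<circ> ?t) = - ?F p" if p: "p permutes B" for p
  proof -
    have "sign (p \<circ> ?t) = sign p * sign ?t"
      using p tp B by (intro sign_compose) (auto simp: permutation_permutes)
    also have "\<dots> = - sign p" using il by (simp add: sign_swap_id)
    finally have s: "sign (p \<circ> ?t) = - sign p" .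
    have "(\<Prod>j\<in>B. M j ((p \<circ> ?t) j)) = (\<Prod>j\<in>B. M (?t j) ((p \<circ> ?t) j))"
    proof (intro prod.cong refl)
      fix j have "M (?t j) = M j" using M by (cases "j = i"; cases "j = l") (auto simp: transpose_def)
      then show "M j ((p \<circ> ?t) j) = M (?t j) ((p \<circ> ?t) j)" by simp
    qed
    also have "\<dots> = (\<Prod>j\<in>B. M j (p j))"
      using prod.reindex_bij_betw[OF permutes_imp_bij[OF tp], of "\<lambda>j. M j (p j)"]
      by simp
    finally show ?thesis using s by simp
  qed
  have "det_on B M = sum ?F ?P" unfolding det_on_def by simp
  also have "\<dots> = sum (\<lambda>p. ?F (p \<circ> ?t)) ?P"
  proof (rule sum.reindex_bij_witness[of _ "\<lambda>p. p \<circ> ?t" "\<lambda>p. p \<circ> ?t"])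
    fix p assume "p \<in> ?P"
    then show "p \<circ> ?t \<circ> ?t = p" "p \<circ> ?t \<in> ?P" 
      using tp by (auto simp: o_assoc[symmetric] permutes_compose)
  qed (use tp in \<open>auto simp: o_assoc[symmetric] permutes_compose\<close>)
  also have "\<dots> = sum (\<lambda>p. - ?F p) ?P"
    by (rule sum.cong[OF refl]) (rule F, simp)
  also have "\<dots> = - sum ?F ?P" by (simp add: sum_negf)
  finally show ?thesis unfolding det_on_def by simp
qed

lemma det_on_id:
  assumes B: "finite B"
  shows "det_on B op_id = 1"
proof -
  have z: "(\<Prod>j\<in>B. op_id j (p j)) = 0" if "p permutes B" "p \<noteq> id" for p
  proof -
    obtain j where "p j \<noteq> j" using \<open>p \<noteq> id\<close> by (metis eq_id_iff)
    then have "j \<in> B" using that(1) by (meson permutes_not_in)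
    then show ?thesis using B \<open>p j \<noteq> j\<close> by (intro prod_zero bexI[of _ j]) (auto simp: op_id_def)
  qed
  have "det_on B op_id = (\<Sum>p\<in>{p. p permutes B}. if p = id then 1 else 0)"
    unfolding det_on_def
  proof (intro sum.cong refl)
    fix p assume p: "p \<in> {p. p permutes B}"
    show "of_int (sign p) * (\<Prod>i\<in>B. op_id i (p i)) = (if p = id then 1 else 0)"
    proof (cases "p = id")
      case True then show ?thesis by (simp add: op_id_def)
    next
      case False then show ?thesis using z p by simp
    qed
  qed
  also have "\<dots> = 1" using B by (simp add: sum.delta finite_permutations permutes_id)
  finally show ?thesis .
qed

lemma det_on_deriv:
  fixes V :: "real \<Rightarrow> op"
  assumes B: "finite B"
    and d: "\<And>i k. i \<in> B \<Longrightarrow> k \<in> B \<Longrightarrow> ((\<lambda>t. V t i k) has_vector_derivative V' i k) (at t within S)"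
  shows "((\<lambda>t. det_on B (V t)) has_vector_derivative
     (\<Sum>p\<in>{p. p permutes B}. of_int (sign p) * (\<Sum>i\<in>B. V' i (p i) * (\<Prod>j\<in>B-{i}. V t j (p j)))))
     (at t within S)"
proof -
  have "((\<lambda>t. det_on B (V t)) has_derivative
     (\<lambda>h. \<Sum>p\<in>{p. p permutes B}. of_int (sign p) * (\<Sum>i\<in>B. (h *\<^sub>R V' i (p i)) * (\<Prod>j\<in>B-{i}. V t j (p j)))))
     (at t within S)"
    unfolding det_on_def
  proof (intro has_derivative_sum has_derivative_mult_right has_derivative_prod)
    fix p i assume "p \<in> {p. p permutes B}" "i \<in> B"
    then have "p i \<in> B" by (simp add: permutes_in_image)
    then show "((\<lambda>t. V t i (p i)) has_derivative (\<lambda>h. h *\<^sub>R V' i (p i))) (at t within S)"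
      using d[OF \<open>i\<in>B\<close>] by (simp add: has_vector_derivative_def)
  qed
  then show ?thesis unfolding has_vector_derivative_def
    by (rule has_derivative_eq_rhs) (auto simp: fun_eq_iff sum_distrib_left mult_ac scaleR_conv_of_real)
qed

lemma jacobi_alg:
  assumes B: "finite B"
    and V': "\<And>i k. i \<in> B \<Longrightarrow> k \<in> B \<Longrightarrow> V' i k = - \<i> * (\<Sum>l\<in>B. H i l * W l k)"
  shows "(\<Sum>p\<in>{p. p permutes B}. of_int (sign p) * (\<Sum>i\<in>B. V' i (p i) * (\<Prod>j\<in>B-{i}. W j (p j))))
     = - \<i> * (\<Sum>i\<in>B. H i i) * det_on B W"
proof -
  let ?P = "{p. p permutes B}"
  have fP: "finite ?P" using B by (simp add: finite_permutations)
  have inner: "(\<Sum>p\<in>?P. of_int (sign p) * (W l (p i) * (\<Prod>j\<in>B-{i}. W j (p j))))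
      = (if l = i then det_on B W else 0)" if i: "i \<in> B" and l: "l \<in> B" for i l
  proof -
    let ?M = "\<lambda>j. if j = i then W l else W j"
    have "(\<Sum>p\<in>?P. of_int (sign p) * (W l (p i) * (\<Prod>j\<in>B-{i}. W j (p j)))) = det_on B ?M"
      unfolding det_on_def
    proof (intro sum.cong refl arg_cong2[where f="(*)"])
      fix p
      have "(\<Prod>j\<in>B. ?M j (p j)) = ?M i (p i) * (\<Prod>j\<in>B-{i}. ?M j (p j))"
        using B i by (simp add: prod.remove)
      also have "(\<Prod>j\<in>B-{i}. ?M j (p j)) = (\<Prod>j\<in>B-{i}. W j (p j))"
        by (intro prod.cong) auto
      finally show "W l (p i) * (\<Prod>j\<in>B-{i}. W j (p j)) = (\<Prod>j\<in>B. ?M j (p j))" by simp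
    qed
    also have "\<dots> = (if l = i then det_on B W else 0)"
    proof (cases "l = i")
      case True
      then have "?M = W" by auto
      then show ?thesis using True by simp
    next
      case False
      then have "det_on B ?M = 0" using B i l
        by (intro det_on_identical_rows[of B i l]) auto
      then show ?thesis using False by simp
    qed
    finally show ?thesis .
  qed
  have "(\<Sum>p\<in>?P. of_int (sign p) * (\<Sum>i\<in>B. V' i (p i) * (\<Prod>j\<in>B-{i}. W j (p j))))
     = (\<Sum>p\<in>?P. \<Sum>i\<in>B. \<Sum>l\<in>B. - \<i> * H i l * (of_int (sign p) * (W l (p i) * (\<Prod>j\<in>B-{i}. W j (p j)))))"
  proof (intro sum.cong refl)
    fix p assume p: "p \<in> ?P"
    have "of_int (sign p) * (\<Sum>i\<in>B. V' i (p i) * (\<Prod>j\<in>B-{i}. W j (p j)))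
       = (\<Sum>i\<in>B. of_int (sign p) * (V' i (p i) * (\<Prod>j\<in>B-{i}. W j (p j))))"
      by (simp add: sum_distrib_left)
    also have "\<dots> = (\<Sum>i\<in>B. \<Sum>l\<in>B. - \<i> * H i l * (of_int (sign p) * (W l (p i) * (\<Prod>j\<in>B-{i}. W j (p j)))))"
    proof (intro sum.cong refl)
      fix i assume i: "i \<in> B"
      then have "p i \<in> B" using p by (simp add: permutes_in_image)
      then show "of_int (sign p) * (V' i (p i) * (\<Prod>j\<in>B-{i}. W j (p j))) =
         (\<Sum>l\<in>B. - \<i> * H i l * (of_int (sign p) * (W l (p i) * (\<Prod>j\<in>B-{i}. W j (p j)))))"
        using V'[OF i] by (simp add: sum_distrib_left sum_distrib_right mult_ac)
    qed
    finally show "of_int (sign p) * (\<Sum>i\<in>B. V' i (p i) * (\<Prod>j\<in>B-{i}. W j (p j)))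
       = (\<Sum>i\<in>B. \<Sum>l\<in>B. - \<i> * H i l * (of_int (sign p) * (W l (p i) * (\<Prod>j\<in>B-{i}. W j (p j)))))" .
  qed
  also have "\<dots> = (\<Sum>i\<in>B. \<Sum>l\<in>B. - \<i> * H i l * (\<Sum>p\<in>?P. of_int (sign p) * (W l (p i) * (\<Prod>j\<in>B-{i}. W j (p j)))))"
    by (simp add: sum.swap[of _ ?P] sum_distrib_left)
  also have "\<dots> = (\<Sum>i\<in>B. \<Sum>l\<in>B. - \<i> * H i l * (if l = i then det_on B W else 0))"
    by (intro sum.cong refl) (simp add: inner)
  also have "\<dots> = (\<Sum>i\<in>B. \<Sum>l\<in>B. if l = i then - \<i> * H i l * det_on B W else 0)"
    by (intro sum.cong refl) auto
  also have "\<dots> = (\<Sum>i\<in>B. - \<i> * H i i * det_on B W)"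
    using B by (simp add: sum.delta)
  also have "\<dots> = - \<i> * (\<Sum>i\<in>B. H i i) * det_on B W"
    by (simp add: sum_distrib_left sum_distrib_right mult_ac)
  finally show ?thesis .
qed

lemma bit_dec: "bit (x::nat) j \<longleftrightarrow> j \<in> set_decode x"
  by (simp add: set_decode_def bit_iff_odd)

lemma dec_sub: assumes "(x::nat) < 2^n" shows "set_decode x \<subseteq> {..<n}"
proof
  fix j assume "j \<in> set_decode x"
  then have "odd (x div 2^j)" by (simp add: set_decode_def)
  then have "x div 2^j \<noteq> 0" by (metis even_zero)
  then have "2^j \<le> x" by (simp add: div_eq_0_iff)
  with assms have "(2::nat)^j < 2^n" by linarith
  then show "j \<in> {..<n}" using power_less_imp_less_exp[of 2 j n] by simp
qed

lemma enc_lt: "X \<subseteq> {..<n} \<Longrightarrow> set_encode X < 2^n"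
proof (induction n arbitrary: X)
  case 0 then show ?case by simp
next
  case (Suc n)
  show ?case
  proof (cases "n \<in> X")
    case True
    have fin: "finite (X - {n})" using Suc.prems finite_subset by blast
    have "X = insert n (X - {n})" using True by auto
    then have "set_encode X = 2^n + set_encode (X - {n})"
      using fin by (metis Diff_iff insertI1 set_encode_insert)
    moreover have "set_encode (X - {n}) < 2^n" using Suc.prems by (intro Suc.IH) auto
    ultimately show ?thesis by simp
  next
    case False
    then have "X \<subseteq> {..<n}" using Suc.prems by (auto simp: less_Suc_eq)
    then have "set_encode X < 2^n" by (rule Suc.IH)
    then show ?thesis by simp
  qed
qed

definition subsets_m :: "nat \<Rightarrow> nat \<Rightarrow> nat set set" where
  "subsets_m n m = {X. X \<subseteq> {..<n} \<and> card X = m}"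

lemma weight_dec: "x < 2^n \<Longrightarrow> weight n x = card (set_decode x)"
proof -
  assume "x < 2^n"
  then have "{j. j < n \<and> bit x j} = set_decode x" using dec_sub[of x n] by (auto simp: bit_dec)
  then show ?thesis by (simp add: weight_def)
qed

lemma sector_image: "sector n m = set_encode ` subsets_m n m"
proof
  show "sector n m \<subseteq> set_encode ` subsets_m n m"
  proof
    fix x assume "x \<in> sector n m"
    then have x: "x < 2^n" "weight n x = m" by (auto simp: sector_def dimq_def)
    then have "set_decode x \<in> subsets_m n m" using dec_sub[OF x(1)] weight_dec[OF x(1)]
      by (simp add: subsets_m_def)
    then show "x \<in> set_encode ` subsets_m n m" by (metis image_eqI set_decode_inverse)
  qed
next
  show "set_encode ` subsets_m n m \<subseteq> sector n m"
  proof
    fix x assume "x \<in> set_encode ` subsets_m n m"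
    then obtain X where X: "X \<subseteq> {..<n}" "card X = m" "x = set_encode X"
      by (auto simp: subsets_m_def)
    have fX: "finite X" using X(1) finite_subset by blast
    have lt: "x < 2^n" using enc_lt[OF X(1)] X(3) by simp
    moreover have "weight n x = m" using weight_dec[OF lt] X fX by simp
    ultimately show "x \<in> sector n m" by (simp add: sector_def dimq_def)
  qed
qed

lemma sector_sum: "(\<Sum>x\<in>sector n m. g x) = (\<Sum>X\<in>subsets_m n m. g (set_encode X))"
proof -
  have "inj_on set_encode (subsets_m n m)"
    by (rule inj_on_subset[OF inj_on_set_encode]) (auto simp: subsets_m_def intro: finite_subset)
  then show ?thesis unfolding sector_image by (simp add: sum.reindex)
qed

definition cnt :: "nat \<Rightarrow> nat \<Rightarrow> nat \<Rightarrow> nat \<Rightarrow> nat" where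
  "cnt n c k m = (if k \<le> m then (n - c) choose (m - k) else 0)"

lemma card_fiber:
  assumes S: "S \<subseteq> {..<n}" and s: "s \<subseteq> S"
  shows "card {X \<in> subsets_m n m. X \<inter> S = s} = cnt n (card S) (card s) m"
proof (cases "card s \<le> m")
  case False
  have "{X \<in> subsets_m n m. X \<inter> S = s} = {}"
  proof (rule ccontr)
    assume "{X \<in> subsets_m n m. X \<inter> S = s} \<noteq> {}"
    then obtain X where X: "X \<subseteq> {..<n}" "card X = m" "X \<inter> S = s" by (auto simp: subsets_m_def)
    then have "card s \<le> card X" by (intro card_mono) (auto intro: finite_subset)
    then show False using False X by simp
  qed
  then show ?thesis using False by (simp only: cnt_def card.empty) simp
next
  case True
  have fS: "finite S" using S finite_subset by blast
  have fs: "finite s" using s fS finite_subset by blast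
  let ?Y = "{Y. Y \<subseteq> {..<n} - S \<and> card Y = m - card s}"
  have "bij_betw (\<lambda>Y. Y \<union> s) ?Y {X \<in> subsets_m n m. X \<inter> S = s}"
  proof (rule bij_betw_byWitness[where f'="\<lambda>X. X - S"])
    show "\<forall>Y\<in>?Y. Y \<union> s - S = Y" using s by auto
    show "\<forall>X\<in>{X \<in> subsets_m n m. X \<inter> S = s}. X - S \<union> s = X" by auto
    show "(\<lambda>Y. Y \<union> s) ` ?Y \<subseteq> {X \<in> subsets_m n m. X \<inter> S = s}"
    proof
      fix X assume "X \<in> (\<lambda>Y. Y \<union> s) ` ?Y"
      then obtain Y where Y: "Y \<subseteq> {..<n} - S" "card Y = m - card s" "X = Y \<union> s" by auto
      have fY: "finite Y" using Y(1) finite_subset by blast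
      have "Y \<inter> s = {}" using Y s by auto
      then have "card X = card Y + card s" using Y fY fs by (simp add: card_Un_disjoint)
      then have "card X = m" using Y True by simp
      then show "X \<in> {X \<in> subsets_m n m. X \<inter> S = s}" using Y s S by (auto simp: subsets_m_def)
    qed
    show "(\<lambda>X. X - S) ` {X \<in> subsets_m n m. X \<inter> S = s} \<subseteq> ?Y"
    proof
      fix Y assume "Y \<in> (\<lambda>X. X - S) ` {X \<in> subsets_m n m. X \<inter> S = s}"
      then obtain X where X: "X \<subseteq> {..<n}" "card X = m" "X \<inter> S = s" "Y = X - S"
        by (auto simp: subsets_m_def)
      have fX: "finite X" using X(1) finite_subset by blast
      have "X = Y \<union> s" "Y \<inter> s = {}" using X by auto
      then have "card X = card Y + card s" using fX by (metis card_Un_disjoint finite_Un)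
      then show "Y \<in> ?Y" using X by auto
    qed
  qed
  then have "card {X \<in> subsets_m n m. X \<inter> S = s} = card ?Y" by (simp add: bij_betw_same_card)
  also have "\<dots> = card ({..<n} - S) choose (m - card s)" by (rule n_subsets) simp
  also have "card ({..<n} - S) = n - card S" using S fS by (simp add: card_Diff_subset)
  finally show ?thesis using True by (simp add: cnt_def)
qed

lemma sector_sum_local:
  fixes g :: "nat \<Rightarrow> complex"
  assumes S: "S \<subseteq> {..<n}"
    and loc: "\<And>x x'. x < dimq n \<Longrightarrow> x' < dimq n \<Longrightarrow> (\<forall>j\<in>S. bit x j = bit x' j) \<Longrightarrow> g x = g x'"
  shows "(\<Sum>x\<in>sector n m. g x) = (\<Sum>s\<in>Pow S. g (set_encode s) * of_nat (cnt n (card S) (card s) m))"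
proof -
  have fS: "finite S" using S finite_subset by blast
  have fin: "finite (subsets_m n m)" unfolding subsets_m_def
    by (rule finite_subset[of _ "Pow {..<n}"]) auto
  have "(\<Sum>x\<in>sector n m. g x) = (\<Sum>X\<in>subsets_m n m. g (set_encode X))" by (rule sector_sum)
  also have "\<dots> = (\<Sum>X\<in>subsets_m n m. g (set_encode (X \<inter> S)))"
  proof (intro sum.cong refl loc)
    fix X assume X: "X \<in> subsets_m n m"
    then have X': "X \<subseteq> {..<n}" by (simp add: subsets_m_def)
    have fX: "finite X" using X' finite_subset by blast
    show "set_encode X < dimq n" using enc_lt[OF X'] by (simp add: dimq_def)
    show "set_encode (X \<inter> S) < dimq n" using enc_lt[of "X \<inter> S" n] X' by (auto simp: dimq_def)
    show "\<forall>j\<in>S. bit (set_encode X) j = bit (set_encode (X \<inter> S)) j"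
      using fX by (simp add: bit_dec)
  qed
  also have "\<dots> = (\<Sum>s\<in>Pow S. \<Sum>X\<in>{X \<in> subsets_m n m. X \<inter> S = s}. g (set_encode (X \<inter> S)))"
    by (rule sum.group[symmetric]) (use fin fS in auto)
  also have "\<dots> = (\<Sum>s\<in>Pow S. g (set_encode s) * of_nat (card {X \<in> subsets_m n m. X \<inter> S = s}))"
    by (intro sum.cong refl) (simp add: mult.commute)
  also have "\<dots> = (\<Sum>s\<in>Pow S. g (set_encode s) * of_nat (cnt n (card S) (card s) m))"
    by (intro sum.cong refl) (simp add: card_fiber[OF S])
  finally show ?thesis .
qed

lemma sum_pow_card:
  fixes F :: "nat \<Rightarrow> 'a::comm_semiring_1"
  assumes "finite S"
  shows "(\<Sum>s\<in>Pow S. F (card s)) = (\<Sum>k\<le>card S. of_nat (card S choose k) * F k)"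
proof -
  have "(\<Sum>s\<in>Pow S. F (card s)) = (\<Sum>k\<in>{..card S}. \<Sum>s\<in>{s \<in> Pow S. card s = k}. F (card s))"
    by (rule sum.group[symmetric]) (use assms in \<open>auto intro: card_mono\<close>)
  also have "\<dots> = (\<Sum>k\<le>card S. of_nat (card S choose k) * F k)"
  proof (intro sum.cong refl)
    fix k
    have "{s \<in> Pow S. card s = k} = {s. s \<subseteq> S \<and> card s = k}" by auto
    then have "card {s \<in> Pow S. card s = k} = card S choose k" using n_subsets[OF assms] by simp
    then show "(\<Sum>s\<in>{s \<in> Pow S. card s = k}. F (card s)) = of_nat (card S choose k) * F k"
      by simp
  qed
  finally show ?thesis .
qed

definition LD :: "nat \<Rightarrow> (nat \<Rightarrow> complex) \<Rightarrow> complex" where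
  "LD n f = f (n - 1) - f 1 - (of_nat n - 2) * (f n - f 0)"

definition LB :: "nat \<Rightarrow> (nat \<Rightarrow> complex) \<Rightarrow> complex" where
  "LB n f = of_nat (n choose 3) * f 0 - of_nat ((n - 1) choose 2) * f 1 + (of_nat n - 2) * f 2 - f 3"

lemma choose2: "real (m choose 2) = real m * (real m - 1) / 2"
proof (induction m)
  case 0 then show ?case by simp
next
  case (Suc m)
  have "(Suc m) choose 2 = m + (m choose 2)"
    by (simp add: numeral_2_eq_2)
  then have "real ((Suc m) choose 2) = real m + real (m choose 2)" by simp
  then show ?case using Suc by (simp add: field_simps)
qed

lemma choose3: "real (m choose 3) = real m * (real m - 1) * (real m - 2) / 6"
proof (induction m)
  case 0 then show ?case by simp
next
  case (Suc m)
  have "(Suc m) choose 3 = (m choose 2) + (m choose 3)"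
    by (simp add: numeral_3_eq_3 numeral_2_eq_2)
  then have "real ((Suc m) choose 3) = real (m choose 2) + real (m choose 3)" by simp
  then show ?case using Suc choose2 by (simp add: field_simps)
qed

lemma choose2c: "complex_of_nat (m choose 2) = of_real (real m * (real m - 1) / 2)"
  by (metis choose2 of_real_of_nat_eq)
lemma choose3c: "complex_of_nat (m choose 3) = of_real (real m * (real m - 1) * (real m - 2) / 6)"
  by (metis choose3 of_real_of_nat_eq)

lemma cs1: "(Suc m) choose m = Suc m"
  using binomial_symmetric[of m "Suc m"] by simp

lemma LD_cnt:
  assumes "c \<le> 2" "k \<le> c" "n \<ge> 3"
  shows "LD n (\<lambda>m. of_nat (cnt n c k m)) = 0"
proof -
  obtain N where n: "n = Suc (Suc (Suc N))" using assms(3) by (metis add.commute le_Suc_ex add_Suc numeral_3_eq_3 add_0)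
  have "c = 0 \<and> k = 0 \<or> c = 1 \<and> k = 0 \<or> c = 1 \<and> k = 1 \<or> c = 2 \<and> k = 0 \<or> c = 2 \<and> k = 1 \<or> c = 2 \<and> k = 2"
    using assms by auto
  then show ?thesis
    by (elim disjE conjE) (simp_all add: LD_def cnt_def n choose2c choose3c cs1 binomial_eq_0 field_simps)
qed

lemma LB_cnt:
  assumes "c \<le> 2" "k \<le> c" "n \<ge> 3"
  shows "LB n (\<lambda>m. of_nat (cnt n c k m)) = 0"
proof -
  obtain N where n: "n = Suc (Suc (Suc N))" using assms(3) by (metis add.commute le_Suc_ex add_Suc numeral_3_eq_3 add_0)
  have "c = 0 \<and> k = 0 \<or> c = 1 \<and> k = 0 \<or> c = 1 \<and> k = 1 \<or> c = 2 \<and> k = 0 \<or> c = 2 \<and> k = 1 \<or> c = 2 \<and> k = 2"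
    using assms by auto
  then show ?thesis
    by (elim disjE conjE) (simp_all add: LB_def cnt_def n choose2c choose3c cs1 binomial_eq_0 field_simps)
qed

lemma LD_Z:
  assumes "n \<ge> 3"
  shows "LD n (\<lambda>m. \<Sum>k\<le>3. of_nat (3 choose k) * ((-1)^k * of_nat (cnt n 3 k m))) = 8"
proof -
  obtain N where n: "n = Suc (Suc (Suc N))" using assms by (metis add.commute le_Suc_ex add_Suc numeral_3_eq_3 add_0)
  show ?thesis
    by (cases N) (simp_all add: LD_def cnt_def n choose2c choose3c cs1 binomial_eq_0 numeral_3_eq_3 field_simps)
qed

lemma LB_Z:
  assumes "n \<ge> 3"
  shows "LB n (\<lambda>m. \<Sum>k\<le>3. of_nat (3 choose k) * ((-1)^k * of_nat (cnt n 3 k m))) = 8"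
proof -
  obtain N where n: "n = Suc (Suc (Suc N))" using assms by (metis add.commute le_Suc_ex add_Suc numeral_3_eq_3 add_0)
  show ?thesis
    by (cases N) (simp_all add: LB_def cnt_def n choose2c choose3c cs1 binomial_eq_0 numeral_3_eq_3 choose2c[unfolded numeral_2_eq_2] field_simps)
qed

definition zf :: "nat \<Rightarrow> nat \<Rightarrow> complex" where
  "zf i x = (if bit x i then -1 else 1)"

lemma op_mult_diag_left:
  assumes "x < dimq n" and D: "\<And>y. y \<noteq> x \<Longrightarrow> D x y = 0"
  shows "op_mult n D B x y = D x x * B x y"
proof -
  have "op_mult n D B x y = (\<Sum>k<dimq n. if k = x then D x x * B x y else 0)"
    unfolding op_mult_def by (intro sum.cong refl) (auto simp: D)
  also have "\<dots> = D x x * B x y" using assms by (simp add: sum.delta)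
  finally show ?thesis .
qed

lemma op_mult_diag_right:
  assumes "y < dimq n" and D: "\<And>x. x \<noteq> y \<Longrightarrow> D x y = 0"
  shows "op_mult n B D x y = B x y * D y y"
proof -
  have "op_mult n B D x y = (\<Sum>k<dimq n. if k = y then B x y * D y y else 0)"
    unfolding op_mult_def by (intro sum.cong refl) (auto simp: D)
  also have "\<dots> = B x y * D y y" using assms by (simp add: sum.delta)
  finally show ?thesis .
qed

lemma zzz_entry:
  assumes "x < dimq n"
  shows "op_mult n (pauliZ i) (op_mult n (pauliZ j) (pauliZ k)) x y
     = (if x = y then zf i x * zf j x * zf k x else 0)"
  using assms
  by (simp add: op_mult_diag_left pauliZ_def zf_def)

lemma tz_val: "(\<Sum>j<n. zf j x) = of_nat n - 2 * of_nat (weight n x)"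
proof -
  let ?A = "{j. j < n \<and> bit x j}" and ?B = "{j. j < n \<and> \<not> bit x j}"
  have "(\<Sum>j<n. zf j x) = (\<Sum>j\<in>?A. -1) + (\<Sum>j\<in>?B. 1)"
  proof -
    have "{..<n} = ?A \<union> ?B" "?A \<inter> ?B = {}" by auto
    then have "(\<Sum>j<n. zf j x) = (\<Sum>j\<in>?A. zf j x) + (\<Sum>j\<in>?B. zf j x)"
      by (metis (no_types, lifting) finite_Un finite_lessThan sum.union_disjoint)
    also have "\<dots> = (\<Sum>j\<in>?A. -1) + (\<Sum>j\<in>?B. 1)" by (simp add: zf_def)
    finally show ?thesis .
  qed
  moreover have "card ?A + card ?B = n"
  proof -
    have "{..<n} = ?A \<union> ?B" "?A \<inter> ?B = {}" by auto
    then have "card {..<n} = card ?A + card ?B"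
      by (metis (no_types, lifting) card_Un_disjoint finite_Un finite_lessThan)
    then show ?thesis by simp
  qed
  ultimately have s: "(\<Sum>j<n. zf j x) = of_nat (card ?B) - of_nat (card ?A)" by simp
  have cB: "card ?B = n - card ?A" "card ?A \<le> n" using \<open>card ?A + card ?B = n\<close> by linarith+
  show ?thesis unfolding s cB(1) weight_def using cB(2) by (simp add: of_nat_diff)
qed

lemma totalZ_entry: "totalZ n x y = (if x = y then of_nat n - 2 * of_nat (weight n x) else 0)"
  by (simp add: totalZ_def pauliZ_def tz_val[symmetric] zf_def)

lemma u1_block:
  assumes "u1_invariant n H" "x < dimq n" "y < dimq n" "weight n x \<noteq> weight n y"
  shows "H x y = 0"
proof -
  have "op_mult n H (totalZ n) x y = H x y * (of_nat n - 2 * of_nat (weight n y))"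
    using assms by (simp add: op_mult_diag_right totalZ_entry)
  moreover have "op_mult n (totalZ n) H x y = (of_nat n - 2 * of_nat (weight n x)) * H x y"
    using assms by (simp add: op_mult_diag_left totalZ_entry)
  ultimately have "H x y * (of_nat n - 2 * of_nat (weight n y)) = (of_nat n - 2 * of_nat (weight n x)) * H x y"
    using assms unfolding u1_invariant_def by metis
  then have "H x y * (2 * of_nat (weight n x) - 2 * of_nat (weight n y)) = 0"
    by (simp add: algebra_simps)
  moreover have "(2 * of_nat (weight n x) - 2 * of_nat (weight n y) :: complex) \<noteq> 0"
    using assms(4) by simp
  ultimately show ?thesis by simp
qed

definition Trip :: "nat \<Rightarrow> (nat \<times> nat \<times> nat) set" where
  "Trip n = {(i,j,k). i < j \<and> j < k \<and> k < n}"

lemma finite_Trip: "finite (Trip n)"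
  by (rule finite_subset[of _ "{..<n} \<times> {..<n} \<times> {..<n}"]) (auto simp: Trip_def)

lemma H3_entry:
  assumes "x < dimq n"
  shows "H3 n H2 a t x y = H2 t x y + (if x = y then
     (\<Sum>(i,j,k)\<in>Trip n. complex_of_real (a i j k t) * (zf i x * zf j x * zf k x)) else 0)"
  using assms unfolding H3_def Trip_def
  by (auto simp: zzz_entry intro!: sum.neutral)

lemma H3_block:
  assumes "u1_invariant n (H2 t)" "x < dimq n" "y < dimq n" "weight n x \<noteq> weight n y"
  shows "H3 n H2 a t x y = 0"
proof -
  have "x \<noteq> y" using assms(4) by auto
  then show ?thesis using assms by (simp add: H3_entry u1_block)
qed

lemma LD_add: "LD n (\<lambda>m. f m + g m) = LD n f + LD n g"
  by (simp add: LD_def algebra_simps)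
lemma LD_sum: "LD n (\<lambda>m. \<Sum>i\<in>I. f i m) = (\<Sum>i\<in>I. LD n (f i))"
  by (simp add: LD_def sum_subtractf sum_distrib_left right_diff_distrib)
lemma LD_mult: "LD n (\<lambda>m. c * f m) = c * LD n f"
  by (simp add: LD_def algebra_simps)
lemma LB_add: "LB n (\<lambda>m. f m + g m) = LB n f + LB n g"
  by (simp add: LB_def algebra_simps)
lemma LB_sum: "LB n (\<lambda>m. \<Sum>i\<in>I. f i m) = (\<Sum>i\<in>I. LB n (f i))"
  by (simp add: LB_def sum_subtractf sum_distrib_left sum.distrib right_diff_distrib)
lemma LB_mult: "LB n (\<lambda>m. c * f m) = c * LB n f"
  by (simp add: LB_def algebra_simps)

lemma sector_lt: "x \<in> sector n m \<Longrightarrow> x < dimq n"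
  by (simp add: sector_def)

lemma finite_sector: "finite (sector n m)"
  by (rule finite_subset[of _ "{..<dimq n}"]) (auto simp: sector_def)

lemma sec_A:
  assumes S: "S \<subseteq> {..<n}" and A: "acts_only_on n S A"
  shows "(\<Sum>x\<in>sector n m. A x x) = (\<Sum>s\<in>Pow S. A (set_encode s) (set_encode s) * of_nat (cnt n (card S) (card s) m))"
proof (rule sector_sum_local[OF S])
  fix x x' assume "x < dimq n" "x' < dimq n" "\<forall>j\<in>S. bit x j = bit x' j"
  then show "A x x = A x' x'" using A unfolding acts_only_on_def by blast
qed

lemma sec_Z:
  assumes q: "(i,j,k) \<in> Trip n"
  shows "(\<Sum>x\<in>sector n m. zf i x * zf j x * zf k x) =
    (\<Sum>l\<le>3. of_nat (3 choose l) * ((-1)^l * of_nat (cnt n 3 l m)))"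
proof -
  let ?S = "{i,j,k}"
  have ijk: "i < j" "j < k" "k < n" using q by (auto simp: Trip_def)
  have S: "?S \<subseteq> {..<n}" using ijk by auto
  have cS: "card ?S = 3" using ijk by auto
  have z: "zf i x * zf j x * zf k x = (\<Prod>q\<in>?S. zf q x)" for x using ijk by simp
  have "(\<Sum>x\<in>sector n m. zf i x * zf j x * zf k x) = (\<Sum>x\<in>sector n m. \<Prod>q\<in>?S. zf q x)"
    by (simp add: z)
  also have "\<dots> = (\<Sum>s\<in>Pow ?S. (\<Prod>q\<in>?S. zf q (set_encode s)) * of_nat (cnt n (card ?S) (card s) m))"
  proof (rule sector_sum_local[OF S])
    fix x x' :: nat assume "\<forall>j\<in>?S. bit x j = bit x' j"
    then show "(\<Prod>q\<in>?S. zf q x) = (\<Prod>q\<in>?S. zf q x')" by (intro prod.cong refl) (auto simp: zf_def)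
  qed
  also have "\<dots> = (\<Sum>s\<in>Pow ?S. (-1)^(card s) * of_nat (cnt n 3 (card s) m))"
  proof (intro sum.cong refl)
    fix s assume s: "s \<in> Pow ?S"
    then have fs: "finite s" using finite_subset by blast
    have "(\<Prod>q\<in>?S. zf q (set_encode s)) = (\<Prod>q\<in>?S. if q \<in> s then -1 else 1)"
      by (intro prod.cong refl) (simp add: zf_def bit_dec fs)
    also have "\<dots> = (\<Prod>q\<in>?S \<inter> s. -1)"
      by (subst prod.inter_restrict[symmetric]) auto
    also have "?S \<inter> s = s" using s by auto
    finally show "(\<Prod>q\<in>?S. zf q (set_encode s)) * of_nat (cnt n (card ?S) (card s) m) =
        (-1)^(card s) * of_nat (cnt n 3 (card s) m)" using cS by simp
  qed
  also have "\<dots> = (\<Sum>l\<le>card ?S. of_nat (card ?S choose l) * ((-1)^l * of_nat (cnt n 3 l m)))"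
    by (rule sum_pow_card) simp
  finally show ?thesis using cS by simp
qed

lemma trace_formula:
  assumes A: "\<And>S. acts_only_on n S (A S)"
    and H: "\<And>x y. x < dimq n \<Longrightarrow> y < dimq n \<Longrightarrow>
             H2 t x y = (\<Sum>S\<in>{S. S \<subseteq> {..<n} \<and> card S \<le> 2}. A S x y)"
  shows "(\<Sum>x\<in>sector n m. H3 n H2 a t x x) =
      (\<Sum>S\<in>{S. S \<subseteq> {..<n} \<and> card S \<le> 2}. \<Sum>s\<in>Pow S. A S (set_encode s) (set_encode s) * of_nat (cnt n (card S) (card s) m))
      + (\<Sum>q\<in>Trip n. complex_of_real (a (fst q) (fst (snd q)) (snd (snd q)) t) *
           (\<Sum>l\<le>3. of_nat (3 choose l) * ((-1)^l * of_nat (cnt n 3 l m))))"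
proof -
  let ?SS = "{S. S \<subseteq> {..<n} \<and> card S \<le> 2}"
  have fSS: "finite ?SS" by (rule finite_subset[of _ "Pow {..<n}"]) auto
  have e1: "(\<Sum>x\<in>sector n m. H3 n H2 a t x x) =
      (\<Sum>S\<in>?SS. \<Sum>x\<in>sector n m. A S x x)
      + (\<Sum>q\<in>Trip n. complex_of_real (a (fst q) (fst (snd q)) (snd (snd q)) t) *
           (\<Sum>x\<in>sector n m. zf (fst q) x * zf (fst (snd q)) x * zf (snd (snd q)) x))"
  proof -
    have "(\<Sum>x\<in>sector n m. H3 n H2 a t x x) = (\<Sum>x\<in>sector n m. (\<Sum>S\<in>?SS. A S x x) +
       (\<Sum>q\<in>Trip n. complex_of_real (a (fst q) (fst (snd q)) (snd (snd q)) t) *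
           (zf (fst q) x * zf (fst (snd q)) x * zf (snd (snd q)) x)))"
      by (intro sum.cong refl) (auto simp: H3_entry H sector_lt split_beta)
    also have "\<dots> = (\<Sum>S\<in>?SS. \<Sum>x\<in>sector n m. A S x x)
      + (\<Sum>q\<in>Trip n. complex_of_real (a (fst q) (fst (snd q)) (snd (snd q)) t) *
           (\<Sum>x\<in>sector n m. zf (fst q) x * zf (fst (snd q)) x * zf (snd (snd q)) x))"
      by (simp add: sum.distrib sum.swap[of _ "sector n m"] sum_distrib_left)
    finally show ?thesis .
  qed
  have e2: "\<And>m. (\<Sum>S\<in>?SS. \<Sum>x\<in>sector n m. A S x x) =
     (\<Sum>S\<in>?SS. \<Sum>s\<in>Pow S. A S (set_encode s) (set_encode s) * of_nat (cnt n (card S) (card s) m))"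
    by (intro sum.cong refl sec_A A) auto
  have e3: "\<And>m. (\<Sum>q\<in>Trip n. complex_of_real (a (fst q) (fst (snd q)) (snd (snd q)) t) *
           (\<Sum>x\<in>sector n m. zf (fst q) x * zf (fst (snd q)) x * zf (snd (snd q)) x)) =
      (\<Sum>q\<in>Trip n. complex_of_real (a (fst q) (fst (snd q)) (snd (snd q)) t) *
           (\<Sum>l\<le>3. of_nat (3 choose l) * ((-1)^l * of_nat (cnt n 3 l m))))"
    by (intro sum.cong refl arg_cong2[where f="(*)"] sec_Z) auto
  show ?thesis unfolding e1 e2 e3 ..
qed

lemma LD_sum_mult: "LD n (\<lambda>m. \<Sum>i\<in>I. c i * f m) = (\<Sum>i\<in>I. c i) * LD n f"
  by (simp add: LD_def sum_distrib_right[symmetric] algebra_simps)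
lemma LB_sum_mult: "LB n (\<lambda>m. \<Sum>i\<in>I. c i * f m) = (\<Sum>i\<in>I. c i) * LB n f"
  by (simp add: LB_def sum_distrib_right[symmetric] algebra_simps)

lemma trace_L:
  assumes n: "n \<ge> 3" and tl: "two_local n (H2 t)"
  shows "LD n (\<lambda>m. \<Sum>x\<in>sector n m. H3 n H2 a t x x) = 8 * of_real (\<Sum>q\<in>Trip n. a (fst q) (fst (snd q)) (snd (snd q)) t)"
    "LB n (\<lambda>m. \<Sum>x\<in>sector n m. H3 n H2 a t x x) = 8 * of_real (\<Sum>q\<in>Trip n. a (fst q) (fst (snd q)) (snd (snd q)) t)"
proof -
  obtain A where A: "\<And>S. acts_only_on n S (A S)"
    and H: "\<And>x y. x < dimq n \<Longrightarrow> y < dimq n \<Longrightarrow>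
             H2 t x y = (\<Sum>S\<in>{S. S \<subseteq> {..<n} \<and> card S \<le> 2}. A S x y)"
    using tl unfolding two_local_def by blast
  have eq: "(\<lambda>m. \<Sum>x\<in>sector n m. H3 n H2 a t x x) = (\<lambda>m.
      (\<Sum>S\<in>{S. S \<subseteq> {..<n} \<and> card S \<le> 2}. \<Sum>s\<in>Pow S. A S (set_encode s) (set_encode s) * of_nat (cnt n (card S) (card s) m))
      + (\<Sum>q\<in>Trip n. complex_of_real (a (fst q) (fst (snd q)) (snd (snd q)) t) *
           (\<Sum>l\<le>3. of_nat (3 choose l) * ((-1)^l * of_nat (cnt n 3 l m)))))"
    by (rule ext, rule trace_formula[where a=a and A=A and n=n and ?H2.0=H2 and t=t, OF A H])
  let ?SS = "{S. S \<subseteq> {..<n} \<and> card S \<le> 2}"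
  have cardle: "card s \<le> card S" if "S \<in> ?SS" "s \<in> Pow S" for S s
    using that by (intro card_mono) (auto intro: finite_subset)
  have "LD n (\<lambda>m. \<Sum>S\<in>?SS. \<Sum>s\<in>Pow S. A S (set_encode s) (set_encode s) * of_nat (cnt n (card S) (card s) m)) = 0"
    unfolding LD_sum LD_mult
    by (intro sum.neutral ballI) (auto simp: LD_cnt n cardle intro!: sum.neutral)
  moreover have "LD n (\<lambda>m. \<Sum>q\<in>Trip n. complex_of_real (a (fst q) (fst (snd q)) (snd (snd q)) t) *
           (\<Sum>l\<le>3. of_nat (3 choose l) * ((-1)^l * of_nat (cnt n 3 l m)))) =
      (\<Sum>q\<in>Trip n. complex_of_real (a (fst q) (fst (snd q)) (snd (snd q)) t)) * 8"
    by (subst LD_sum_mult) (simp add: LD_Z n)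
  ultimately show "LD n (\<lambda>m. \<Sum>x\<in>sector n m. H3 n H2 a t x x) = 8 * of_real (\<Sum>q\<in>Trip n. a (fst q) (fst (snd q)) (snd (snd q)) t)"
    unfolding eq LD_add by (simp add: mult.commute)
  have "LB n (\<lambda>m. \<Sum>S\<in>?SS. \<Sum>s\<in>Pow S. A S (set_encode s) (set_encode s) * of_nat (cnt n (card S) (card s) m)) = 0"
    unfolding LB_sum LB_mult
    by (intro sum.neutral ballI) (auto simp: LB_cnt n cardle intro!: sum.neutral)
  moreover have "LB n (\<lambda>m. \<Sum>q\<in>Trip n. complex_of_real (a (fst q) (fst (snd q)) (snd (snd q)) t) *
           (\<Sum>l\<le>3. of_nat (3 choose l) * ((-1)^l * of_nat (cnt n 3 l m)))) =
      (\<Sum>q\<in>Trip n. complex_of_real (a (fst q) (fst (snd q)) (snd (snd q)) t)) * 8"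
    by (subst LB_sum_mult) (simp add: LB_Z n)
  ultimately show "LB n (\<lambda>m. \<Sum>x\<in>sector n m. H3 n H2 a t x x) = 8 * of_real (\<Sum>q\<in>Trip n. a (fst q) (fst (snd q)) (snd (snd q)) t)"
    unfolding eq LB_add by (simp add: mult.commute)
qed

lemma pc_common:
  fixes f :: "'i \<Rightarrow> real \<Rightarrow> 'b::real_normed_vector"
  assumes "finite I" "\<And>i. i \<in> I \<Longrightarrow> piecewise_continuous_on a b (f i)"
  shows "\<exists>D. finite D \<and> (\<forall>i\<in>I. continuous_on ({a..b} - D) (f i))"
  using assms
proof (induction I rule: finite_induct)
  case empty show ?case by auto
next
  case (insert i I)
  obtain D where D: "finite D" "\<forall>j\<in>I. continuous_on ({a..b} - D) (f j)" using insert by blast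
  obtain Di where Di: "finite Di" "continuous_on ({a..b} - Di) (f i)"
    using insert.prems[of i] unfolding piecewise_continuous_on_def by blast
  have "\<forall>j\<in>insert i I. continuous_on ({a..b} - (D \<union> Di)) (f j)"
    using D Di by (auto intro: continuous_on_subset)
  then show ?case using D Di by blast
qed

lemma det_on_cong:
  assumes "\<And>i j. i \<in> B \<Longrightarrow> j \<in> B \<Longrightarrow> M i j = M' i j"
  shows "det_on B M = det_on B M'"
  unfolding det_on_def
proof (intro sum.cong refl arg_cong2[where f="(*)"] prod.cong)
  fix p i assume "p \<in> {p. p permutes B}" "i \<in> B"
  then show "M i (p i) = M' i (p i)" using assms by (simp add: permutes_in_image)
qed

lemma H3e:
  assumes "x < dimq n"
  shows "H3 n H2 a s x y = H2 s x y + (if x = y then (\<Sum>q\<in>Trip n. complex_of_real (a (fst q) (fst (snd q)) (snd (snd q)) s)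
      * (zf (fst q) x * zf (fst (snd q)) x * zf (snd (snd q)) x)) else 0)"
  using assms by (simp add: H3_entry split_beta)

lemma H3_diag_real:
  assumes "hermitian_op n (H2 t)" "x < dimq n"
  shows "Im (H3 n H2 a t x x) = 0"
proof -
  have "H2 t x x = cnj (H2 t x x)" using assms unfolding hermitian_op_def by blast
  then have "Im (H2 t x x) = 0" by (metis Reals_cnj_iff complex_is_Real_iff)
  moreover have "Im (zf i x) = 0" for i by (simp add: zf_def)
  moreover have "Re (zf i x) * Re (zf j x) * Im (zf k x) = 0" for i j k by (simp add: zf_def)
  ultimately show ?thesis using assms by (simp add: H3e Im_sum zf_def)
qed

lemma det_sector:
  fixes n :: nat and T :: real and H2 :: "real \<Rightarrow> op"
    and a :: "nat \<Rightarrow> nat \<Rightarrow> nat \<Rightarrow> real \<Rightarrow> real" and V :: "real \<Rightarrow> op"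
  assumes T: "0 \<le> T"
    and herm: "\<And>t. t \<in> {0..T} \<Longrightarrow> hermitian_op n (H2 t)"
    and u1: "\<And>t. t \<in> {0..T} \<Longrightarrow> u1_invariant n (H2 t)"
    and pcH: "\<And>x y. x < dimq n \<Longrightarrow> y < dimq n \<Longrightarrow> piecewise_continuous_on 0 T (\<lambda>t. H2 t x y)"
    and pca: "\<And>i j k. i < j \<Longrightarrow> j < k \<Longrightarrow> k < n \<Longrightarrow> piecewise_continuous_on 0 T (a i j k)"
    and toe: "time_ordered_exp n T (H3 n H2 a) V"
  shows "(\<lambda>t. Re (\<Sum>x\<in>sector n m. H3 n H2 a t x x)) integrable_on {0..T}"
    "det_on (sector n m) (V T) = exp (- \<i> * of_real (integral {0..T} (\<lambda>t. Re (\<Sum>x\<in>sector n m. H3 n H2 a t x x))))"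
proof -
  define N where "N = dimq n"
  define B where "B = sector n m"
  define \<tau>c where "\<tau>c = (\<lambda>s. \<Sum>x\<in>B. H3 n H2 a s x x)"
  define \<tau> where "\<tau> = (\<lambda>s. Re (\<tau>c s))"
  define aq where "aq = (\<lambda>q s. a (fst q) (fst (snd q)) (snd (snd q)) s)"
  have fB: "finite B" unfolding B_def by (rule finite_sector)
  have BN: "B \<subseteq> {..<N}" unfolding B_def N_def by (auto simp: sector_def)
  have pcaq: "piecewise_continuous_on 0 T (aq q)" if "q \<in> Trip n" for q
    using that pca unfolding aq_def Trip_def by auto
  have H3e': "H3 n H2 a s x y = H2 s x y + (if x = y then (\<Sum>q\<in>Trip n. complex_of_real (aq q s)
      * (zf (fst q) x * zf (fst (snd q)) x * zf (snd (snd q)) x)) else 0)" if "x < N" for s x y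
    using that unfolding N_def aq_def by (rule H3e)
  have intH3: "(\<lambda>s. H3 n H2 a s x x) integrable_on {0..T}" if x: "x < N" for x
  proof -
    have "(\<lambda>s. H2 s x x + (\<Sum>q\<in>Trip n. complex_of_real (aq q s)
      * (zf (fst q) x * zf (fst (snd q)) x * zf (snd (snd q)) x))) integrable_on {0..T}"
    proof (intro integrable_add integrable_sum finite_Trip integrable_on_mult_left)
      show "(\<lambda>s. H2 s x x) integrable_on {0..T}" using x pcH unfolding N_def by (intro pc_integrable) auto
      fix q assume "q \<in> Trip n"
      then have "aq q integrable_on {0..T}" by (intro pc_integrable pcaq)
      then show "(\<lambda>s. complex_of_real (aq q s)) integrable_on {0..T}"
        using integrable_linear[OF _ bounded_linear_of_real] by (auto simp: o_def)
    qed
    then show ?thesis using x by (simp add: H3e')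
  qed
  have int\<tau>c: "\<tau>c integrable_on {0..T}"
    unfolding \<tau>c_def using BN by (intro integrable_sum fB intH3) auto
  have int\<tau>: "\<tau> integrable_on {0..T}"
    using integrable_linear[OF int\<tau>c bounded_linear_Re] unfolding \<tau>_def by (simp add: o_def)
  then show "(\<lambda>t. Re (\<Sum>x\<in>sector n m. H3 n H2 a t x x)) integrable_on {0..T}"
    unfolding \<tau>_def \<tau>c_def B_def .
  have \<tau>real: "\<tau>c s = of_real (\<tau> s)" if "s \<in> {0..T}" for s
  proof -
    have "Im (\<tau>c s) = 0" unfolding \<tau>c_def Im_sum using BN herm[OF that] unfolding N_def
      by (intro sum.neutral ballI H3_diag_real) auto
    then show ?thesis unfolding \<tau>_def by (simp add: complex_eq_iff)
  qed
  obtain D1 where D1: "finite D1" "\<forall>q\<in>{..<N} \<times> {..<N}. continuous_on ({0..T} - D1) (\<lambda>t. H2 t (fst q) (snd q))"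
    using pc_common[of "{..<N} \<times> {..<N}" 0 T "\<lambda>q t. H2 t (fst q) (snd q)"] pcH unfolding N_def by auto
  obtain D2 where D2: "finite D2" "\<forall>q\<in>Trip n. continuous_on ({0..T} - D2) (aq q)"
    using pc_common[of "Trip n" 0 T aq] pcaq finite_Trip by blast
  define U where "U = {0<..<T} - (D1 \<union> D2)"
  have oU: "open U" unfolding U_def using D1(1) D2(1)
    by (intro open_Diff finite_imp_closed) auto
  have U0T: "U \<subseteq> {0..T}" unfolding U_def by auto
  have intU: "t \<in> interior S" if "t \<in> U" "U \<subseteq> S" for t S
    using that oU interior_maximal by blast
  have ctsH: "isCont (\<lambda>s. H2 s x y) t" if "t \<in> U" "x < N" "y < N" for t x y
  proof -
    have "continuous_on ({0..T} - D1) (\<lambda>s. H2 s x y)" using D1(2) that by force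
    moreover have "t \<in> interior ({0..T} - D1)" using that by (intro intU) (auto simp: U_def)
    ultimately show ?thesis by (rule continuous_on_interior)
  qed
  have ctsa: "isCont (aq q) t" if "t \<in> U" "q \<in> Trip n" for t q
  proof -
    have "continuous_on ({0..T} - D2) (aq q)" using D2(2) that by force
    moreover have "t \<in> interior ({0..T} - D2)" using that by (intro intU) (auto simp: U_def)
    ultimately show ?thesis by (rule continuous_on_interior)
  qed
  have ctsV: "isCont (\<lambda>s. V s x y) t" if "t \<in> U" "x < N" "y < N" for t x y
  proof -
    have "continuous_on {0..T} (\<lambda>s. V s x y)" using toe that unfolding time_ordered_exp_def N_def by blast
    moreover have "t \<in> interior {0..T}" using that U0T by (intro intU) auto
    ultimately show ?thesis by (rule continuous_on_interior)
  qed
  have ctsH3: "isCont (\<lambda>s. H3 n H2 a s x y) t" if "t \<in> U" "x < N" "y < N" for t x y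
  proof -
    have "isCont (\<lambda>s. H2 s x y + (if x = y then (\<Sum>q\<in>Trip n. complex_of_real (aq q s)
      * (zf (fst q) x * zf (fst (snd q)) x * zf (snd (snd q)) x)) else 0)) t"
      using that by (cases "x = y") (auto intro!: continuous_intros ctsH ctsa)
    then show ?thesis using that(2) by (simp add: H3e')
  qed
  define f where "f = (\<lambda>x y s. op_mult n (H3 n H2 a s) (V s) x y)"
  have Veq: "V u x y = op_id x y - \<i> * integral {0..u} (f x y)" if uxy: "u \<in> {0..T}" "x < N" "y < N" for u x y
  proof -
    have "\<forall>t\<in>{0..T}. \<forall>x<dimq n. \<forall>y<dimq n.
        \<exists>I. ((\<lambda>s. op_mult n (H3 n H2 a s) (V s) x y) has_integral I) {0..t} \<and>
            V t x y = op_id x y - \<i> * I" using toe unfolding time_ordered_exp_def by blast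
    then obtain I where "(f x y has_integral I) {0..u}" "V u x y = op_id x y - \<i> * I"
      using uxy unfolding N_def f_def by blast
    then show ?thesis by (simp add: integral_unique)
  qed
  have intf: "f x y integrable_on {0..T}" if xy: "x < N" "y < N" for x y
  proof -
    have "T \<in> {0..T}" using T by simp
    then obtain I where "(f x y has_integral I) {0..T}"
      using Veq xy toe unfolding time_ordered_exp_def N_def f_def by blast
    then show ?thesis by blast
  qed
  have ctsf: "isCont (f x y) t" if "t \<in> U" "x < N" "y < N" for t x y
    unfolding f_def op_mult_def N_def[symmetric] using that
    by (intro continuous_intros ctsH3 ctsV) auto
  have Vder: "((\<lambda>s. V s x y) has_vector_derivative (- \<i> * f x y t)) (at t)" if t: "t \<in> U" and xy: "x < N" "y < N" for t x y
  proof -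
    have t0T: "t \<in> {0..T} - {}" using t U0T by auto
    have "((\<lambda>u. integral {0..u} (f x y)) has_vector_derivative f x y t) (at t within {0..T} - {})"
      by (rule integral_has_vector_derivative_continuous_at[OF intf[OF xy] t0T finite.emptyI])
        (rule continuous_at_imp_continuous_at_within[OF ctsf[OF t xy]])
    moreover have "t \<in> interior {0..T}" using t U0T by (intro intU) auto
    ultimately have "((\<lambda>u. integral {0..u} (f x y)) has_vector_derivative f x y t) (at t)"
      by (metis Diff_empty at_within_interior)
    then have "((\<lambda>u. op_id x y - \<i> * integral {0..u} (f x y)) has_vector_derivative (0 - \<i> * f x y t)) (at t)"
      by (rule has_vector_derivative_diff[OF has_vector_derivative_const has_vector_derivative_mult_right])
    then have d: "((\<lambda>u. op_id x y - \<i> * integral {0..u} (f x y)) has_vector_derivative (- \<i> * f x y t)) (at t)"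
      by simp
    have tS: "t \<in> {0<..<T}" using t by (simp add: U_def)
    have eqS: "op_id x y - \<i> * integral {0..u} (f x y) = V u x y" if "u \<in> {0<..<T}" for u
      using Veq[of u x y] xy that by simp
    show ?thesis
      by (rule has_vector_derivative_transform_within_open[OF d open_greaterThanLessThan tS eqS])
  qed
  have Hblk: "H3 n H2 a t i l = 0" if "t \<in> {0..T}" "i \<in> B" "l < N" "l \<notin> B" for t i l
  proof (rule H3_block[where n=n and ?H2.0=H2 and t=t, OF u1[OF that(1)]])
    show "i < dimq n" using that BN N_def by auto
    show "l < dimq n" using that N_def by auto
    show "weight n i \<noteq> weight n l" using that unfolding B_def sector_def N_def by auto
  qed
  have phider: "((\<lambda>s. det_on B (V s)) has_vector_derivative (- \<i> * \<tau>c t * det_on B (V t))) (at t)"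
    if t: "t \<in> U" for t
  proof -
    have "((\<lambda>s. det_on B (V s)) has_vector_derivative
     (\<Sum>p\<in>{p. p permutes B}. of_int (sign p) * (\<Sum>i\<in>B. (- \<i> * f i (p i) t) * (\<Prod>j\<in>B-{i}. V t j (p j)))))
     (at t)"
    proof -
      have dV: "((\<lambda>s. V s i k) has_vector_derivative (- \<i> * f i k t)) (at t within UNIV)"
        if "i \<in> B" "k \<in> B" for i k using Vder[OF t] BN that by auto
      show ?thesis using det_on_deriv[OF fB dV] by simp
    qed
    also have "(\<Sum>p\<in>{p. p permutes B}. of_int (sign p) * (\<Sum>i\<in>B. (- \<i> * f i (p i) t) * (\<Prod>j\<in>B-{i}. V t j (p j))))
       = - \<i> * (\<Sum>i\<in>B. H3 n H2 a t i i) * det_on B (V t)"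
    proof (rule jacobi_alg[where H="\<lambda>i l. H3 n H2 a t i l" and W="V t" and V'="\<lambda>i k. - \<i> * f i k t", OF fB])
      fix i k assume ik: "i \<in> B" "k \<in> B"
      have "f i k t = (\<Sum>l<N. H3 n H2 a t i l * V t l k)" unfolding f_def op_mult_def N_def ..
      also have "\<dots> = (\<Sum>l\<in>B. H3 n H2 a t i l * V t l k)"
        using BN t U0T ik by (intro sum.mono_neutral_right) (auto simp: Hblk)
      finally show "- \<i> * f i k t = - \<i> * (\<Sum>l\<in>B. H3 n H2 a t i l * V t l k)" by simp
    qed
    finally show ?thesis unfolding \<tau>c_def .
  qed
  define G where "G = (\<lambda>u. integral {0..u} \<tau>)"
  have Gder: "(G has_real_derivative \<tau> t) (at t)" if t: "t \<in> U" for t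
  proof -
    have t0T: "t \<in> {0..T} - {}" using t U0T by auto
    have "isCont \<tau>c t" unfolding \<tau>c_def using t BN by (intro continuous_intros ctsH3) auto
    then have "isCont \<tau> t" unfolding \<tau>_def by (rule continuous_Re)
    then have "(G has_vector_derivative \<tau> t) (at t within {0..T} - {})"
      unfolding G_def
      by (rule integral_has_vector_derivative_continuous_at[OF int\<tau> t0T finite.emptyI
            continuous_at_imp_continuous_at_within])
    moreover have "t \<in> interior {0..T}" using t U0T by (intro intU) auto
    ultimately have "(G has_vector_derivative \<tau> t) (at t)"
      by (metis Diff_empty at_within_interior)
    then show ?thesis by (simp add: has_real_derivative_iff_has_vector_derivative)
  qed
  define E where "E = (\<lambda>s. exp (\<i> * of_real (G s)))"
  have expder: "((\<lambda>z. exp (\<i> * z)) has_field_derivative \<i> * exp (\<i> * w)) (at w)" for w :: complex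
    by (auto intro!: derivative_eq_intros)
  have Eder: "(E has_vector_derivative (of_real (\<tau> t) * (\<i> * E t))) (at t)" if t: "t \<in> U" for t
  proof -
    have "(((\<lambda>z. exp (\<i> * z)) \<circ> (\<lambda>s. of_real (G s))) has_vector_derivative
        (of_real (\<tau> t) * (\<i> * exp (\<i> * of_real (G t))))) (at t)"
      by (rule field_vector_diff_chain_at[OF has_vector_derivative_of_real[OF Gder[OF t]] expder])
    then show ?thesis unfolding E_def by (simp add: o_def)
  qed
  define \<psi> where "\<psi> = (\<lambda>s. det_on B (V s) * E s)"
  have \<psi>der: "(\<psi> has_vector_derivative 0) (at t)" if t: "t \<in> U" for t
  proof -
    have "(\<psi> has_vector_derivative (det_on B (V t) * (of_real (\<tau> t) * (\<i> * E t)) + (- \<i> * \<tau>c t * det_on B (V t)) * E t)) (at t)"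
      unfolding \<psi>_def by (rule has_vector_derivative_mult[OF phider[OF t] Eder[OF t]])
    moreover have "\<tau>c t = of_real (\<tau> t)" using t U0T by (intro \<tau>real) auto
    ultimately show ?thesis by (simp add: algebra_simps)
  qed
  have cont\<psi>: "continuous_on {0..T} \<psi>"
  proof -
    have cV: "continuous_on {0..T} (\<lambda>s. V s i j)" if "i < N" "j < N" for i j
      using toe that unfolding time_ordered_exp_def N_def by blast
    have "continuous_on {0..T} (\<lambda>s. det_on B (V s))"
      unfolding det_on_def
    proof (intro continuous_on_sum continuous_on_mult continuous_on_const continuous_on_prod)
      fix p i assume "p \<in> {p. p permutes B}" "i \<in> B"
      then have "p i \<in> B" by (simp add: permutes_in_image)
      then show "continuous_on {0..T} (\<lambda>s. V s i (p i))" using cV BN \<open>i \<in> B\<close> by auto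
    qed
    moreover have "continuous_on {0..T} G" unfolding G_def by (rule indefinite_integral_continuous_1[OF int\<tau>])
    then have "continuous_on {0..T} E" unfolding E_def by (intro continuous_intros)
    ultimately show ?thesis unfolding \<psi>_def by (intro continuous_intros)
  qed
  have \<psi>0: "\<psi> 0 = 1"
  proof -
    have "det_on B (V 0) = det_on B op_id"
    proof (rule det_on_cong)
      fix i j assume "i \<in> B" "j \<in> B"
      then show "V 0 i j = op_id i j" using Veq[of 0 i j] BN T by auto
    qed
    then have "det_on B (V 0) = 1" using det_on_id[OF fB] by simp
    moreover have "E 0 = 1" unfolding E_def G_def by simp
    ultimately show ?thesis unfolding \<psi>_def by simp
  qed
  have \<psi>T: "\<psi> T = 1"
  proof (rule has_derivative_zero_unique_strong_interval[of "D1 \<union> D2 \<union> {0, T}" 0 T \<psi>])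
    show "finite (D1 \<union> D2 \<union> {0, T})" using D1 D2 by simp
    show "continuous_on {0..T} \<psi>" by (rule cont\<psi>)
    show "\<psi> 0 = 1" by (rule \<psi>0)
    show "T \<in> {0..T}" using T by simp
    fix x assume x: "x \<in> {0..T} - (D1 \<union> D2 \<union> {0, T})"
    then have xU: "x \<in> U" unfolding U_def by auto
    have "(\<psi> has_derivative (\<lambda>h. h *\<^sub>R 0)) (at x)"
      using \<psi>der[OF xU] unfolding has_vector_derivative_def .
    then show "(\<psi> has_derivative (\<lambda>h. 0)) (at x within {0..T})"
      by (simp add: has_derivative_at_withinI)
  qed
  have "det_on B (V T) = det_on B (V T) * (E T * exp (- \<i> * of_real (G T)))"
    unfolding E_def by (simp add: exp_minus[symmetric] exp_add[symmetric])
  also have "\<dots> = exp (- \<i> * of_real (G T))" using \<psi>T unfolding \<psi>_def by (simp add: mult.assoc[symmetric])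
  finally show "det_on (sector n m) (V T) = exp (- \<i> * of_real (integral {0..T} (\<lambda>t. Re (\<Sum>x\<in>sector n m. H3 n H2 a t x x))))"
    unfolding G_def \<tau>_def \<tau>c_def B_def .
qed

definition LDr :: "nat \<Rightarrow> (nat \<Rightarrow> real) \<Rightarrow> real" where
  "LDr n g = g (n - 1) - g 1 - (real n - 2) * (g n - g 0)"
definition LBr :: "nat \<Rightarrow> (nat \<Rightarrow> real) \<Rightarrow> real" where
  "LBr n g = real (n choose 3) * g 0 - real ((n - 1) choose 2) * g 1 + (real n - 2) * g 2 - g 3"

lemma Re_LD: "Re (LD n f) = LDr n (\<lambda>m. Re (f m))"
  by (simp add: LD_def LDr_def)
lemma Re_LB: "Re (LB n f) = LBr n (\<lambda>m. Re (f m))"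
  by (simp add: LB_def LBr_def)

lemma icm: "integral S (\<lambda>t. c * f t) = c * integral S (f :: real \<Rightarrow> real)"
  using integral_cmul[where f=f and S=S and c=c] by simp
lemma iim: "(f :: real \<Rightarrow> real) integrable_on S \<Longrightarrow> (\<lambda>t. c * f t) integrable_on S"
  using integrable_cmul[where f=f and S=S and c=c] by simp

lemma integral_LDr:
  fixes g :: "nat \<Rightarrow> real \<Rightarrow> real"
  assumes i: "\<And>m. g m integrable_on S"
  shows "integral S (\<lambda>t. LDr n (\<lambda>m. g m t)) = LDr n (\<lambda>m. integral S (g m))"
proof -
  have e1: "integral S (\<lambda>t. g a t - g b t) = integral S (g a) - integral S (g b)" for a b
    by (rule integral_diff[OF i i])
  have ia: "(\<lambda>t. g a t - g b t) integrable_on S" for a b by (rule integrable_diff[OF i i])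
  have "integral S (\<lambda>t. LDr n (\<lambda>m. g m t)) =
     integral S (\<lambda>t. (g (n - 1) t - g 1 t) - (real n - 2) * (g n t - g 0 t))"
    by (simp only: LDr_def)
  also have "\<dots> = integral S (\<lambda>t. g (n - 1) t - g 1 t) - integral S (\<lambda>t. (real n - 2) * (g n t - g 0 t))"
    by (rule integral_diff[OF ia iim[OF ia]])
  also have "\<dots> = LDr n (\<lambda>m. integral S (g m))"
    by (simp only: icm e1 LDr_def)
  finally show ?thesis .
qed

lemma integral_LBr:
  fixes g :: "nat \<Rightarrow> real \<Rightarrow> real"
  assumes i: "\<And>m. g m integrable_on S"
  shows "integral S (\<lambda>t. LBr n (\<lambda>m. g m t)) = LBr n (\<lambda>m. integral S (g m))"
proof -
  let ?c1 = "real (n choose 3)" and ?c2 = "real ((n - 1) choose 2)" and ?c3 = "real n - 2"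
  have j1: "(\<lambda>t. ?c1 * g 0 t - ?c2 * g 1 t) integrable_on S"
    by (intro integrable_diff iim i)
  have j2: "(\<lambda>t. ?c1 * g 0 t - ?c2 * g 1 t + ?c3 * g 2 t) integrable_on S"
    by (intro integrable_add j1 iim i)
  have "integral S (\<lambda>t. LBr n (\<lambda>m. g m t)) =
     integral S (\<lambda>t. ?c1 * g 0 t - ?c2 * g 1 t + ?c3 * g 2 t - g 3 t)"
    by (simp only: LBr_def)
  also have "\<dots> = integral S (\<lambda>t. ?c1 * g 0 t - ?c2 * g 1 t + ?c3 * g 2 t) - integral S (g 3)"
    by (rule integral_diff[OF j2 i])
  also have "integral S (\<lambda>t. ?c1 * g 0 t - ?c2 * g 1 t + ?c3 * g 2 t) =
      integral S (\<lambda>t. ?c1 * g 0 t - ?c2 * g 1 t) + integral S (\<lambda>t. ?c3 * g 2 t)"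
    by (rule integral_add[OF j1 iim[OF i]])
  also have "integral S (\<lambda>t. ?c1 * g 0 t - ?c2 * g 1 t) =
      integral S (\<lambda>t. ?c1 * g 0 t) - integral S (\<lambda>t. ?c2 * g 1 t)"
    by (rule integral_diff[OF iim[OF i] iim[OF i]])
  finally show ?thesis by (simp only: icm LBr_def)
qed

lemma theta_eq:
  assumes "det_on (sector n m) W = exp (- \<i> * of_real g)"
  shows "\<exists>k::int. theta n W m = - g + 2 * pi * of_int k"
proof -
  obtain k :: int where "Im (- \<i> * of_real g) - of_int k * (2 * pi) = Arg (exp (- \<i> * of_real g))"
    using Arg_exp_diff_2pi by blast
  then have h: "Arg (exp (- \<i> * of_real g)) = - g - of_int k * (2 * pi)" by simp
  have "theta n W m = - g + 2 * pi * of_int (- k)" unfolding theta_def assms h by simp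
  then show ?thesis by blast
qed

theorem mainTheorem13:
  fixes n :: nat and T :: real
    and H2 :: "real \<Rightarrow> op"
    and a :: "nat \<Rightarrow> nat \<Rightarrow> nat \<Rightarrow> real \<Rightarrow> real"
    and V :: "real \<Rightarrow> op"
  assumes "n \<ge> 3" and "0 \<le> T"
    and "\<And>t. t \<in> {0..T} \<Longrightarrow> hermitian_op n (H2 t)"
    and "\<And>t. t \<in> {0..T} \<Longrightarrow> u1_invariant n (H2 t)"
    and "\<And>t. t \<in> {0..T} \<Longrightarrow> two_local n (H2 t)"
    and "\<And>x y. x < dimq n \<Longrightarrow> y < dimq n \<Longrightarrow> piecewise_continuous_on 0 T (\<lambda>t. H2 t x y)"
    and "\<And>i j k. i < j \<Longrightarrow> j < k \<Longrightarrow> k < n \<Longrightarrow> piecewise_continuous_on 0 T (a i j k)"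
    and "time_ordered_exp n T (H3 n H2 a) V"
  shows "cong_2pi (beta3 n (V T)) (Delta3 n (V T)) \<and>
         cong_2pi (Delta3 n (V T))
           (-8 * integral {0..T} (\<lambda>t. \<Sum>(i,j,k)\<in>{(i,j,k). i < j \<and> j < k \<and> k < n}. a i j k t))"
proof -
  note n = assms(1)
  define \<tau> where "\<tau> = (\<lambda>m t. Re (\<Sum>x\<in>sector n m. H3 n H2 a t x x))"
  define G where "G = (\<lambda>m. integral {0..T} (\<tau> m))"
  define A where "A = (\<lambda>t. \<Sum>(i,j,k)\<in>{(i,j,k). i < j \<and> j < k \<and> k < n}. a i j k t)"
  have int\<tau>: "\<tau> m integrable_on {0..T}" for m
    unfolding \<tau>_def by (rule det_sector(1)[OF assms(2,3,4,6,7,8)])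
  have det: "det_on (sector n m) (V T) = exp (- \<i> * of_real (G m))" for m
    unfolding G_def \<tau>_def by (rule det_sector(2)[OF assms(2,3,4,6,7,8)])
  have "\<forall>m. \<exists>k::int. theta n (V T) m = - G m + 2 * pi * of_int k"
    using theta_eq[OF det] by blast
  then obtain k :: "nat \<Rightarrow> int" where k: "\<And>m. theta n (V T) m = - G m + 2 * pi * of_int (k m)"
    by metis
  have Aeq: "A t = (\<Sum>q\<in>Trip n. a (fst q) (fst (snd q)) (snd (snd q)) t)" for t
    unfolding A_def Trip_def by (simp add: split_beta)
  have ptD: "LDr n (\<lambda>m. \<tau> m t) = 8 * A t" if "t \<in> {0..T}" for t
  proof -
    have "LDr n (\<lambda>m. \<tau> m t) = Re (LD n (\<lambda>m. \<Sum>x\<in>sector n m. H3 n H2 a t x x))"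
      unfolding \<tau>_def Re_LD ..
    also have "\<dots> = 8 * A t" unfolding trace_L(1)[where n=n and ?H2.0=H2 and t=t and a=a, OF n assms(5)[OF that]] Aeq by simp
    finally show ?thesis .
  qed
  have ptB: "LBr n (\<lambda>m. \<tau> m t) = 8 * A t" if "t \<in> {0..T}" for t
  proof -
    have "LBr n (\<lambda>m. \<tau> m t) = Re (LB n (\<lambda>m. \<Sum>x\<in>sector n m. H3 n H2 a t x x))"
      unfolding \<tau>_def Re_LB ..
    also have "\<dots> = 8 * A t" unfolding trace_L(2)[where n=n and ?H2.0=H2 and t=t and a=a, OF n assms(5)[OF that]] Aeq by simp
    finally show ?thesis .
  qed
  have GD: "LDr n G = 8 * integral {0..T} A"
  proof -
    have "LDr n G = integral {0..T} (\<lambda>t. LDr n (\<lambda>m. \<tau> m t))"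
      unfolding G_def by (rule integral_LDr[OF int\<tau>, symmetric])
    also have "\<dots> = integral {0..T} (\<lambda>t. 8 * A t)" by (rule integral_cong) (rule ptD)
    also have "\<dots> = 8 * integral {0..T} A" by (rule icm)
    finally show ?thesis .
  qed
  have GB: "LBr n G = 8 * integral {0..T} A"
  proof -
    have "LBr n G = integral {0..T} (\<lambda>t. LBr n (\<lambda>m. \<tau> m t))"
      unfolding G_def by (rule integral_LBr[OF int\<tau>, symmetric])
    also have "\<dots> = integral {0..T} (\<lambda>t. 8 * A t)" by (rule integral_cong) (rule ptB)
    also have "\<dots> = 8 * integral {0..T} A" by (rule icm)
    finally show ?thesis .
  qed
  have rn: "real n - 2 = of_int (int n - 2)" using n by simp
  define KD where "KD = k (n - 1) - k 1 - (int n - 2) * (k n - k 0)"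
  define KB where "KB = int (n choose 3) * k 0 - int ((n - 1) choose 2) * k 1 + (int n - 2) * k 2 - k 3"
  have D: "Delta3 n (V T) = - LDr n G + 2 * pi * of_int KD"
    unfolding Delta3_def LDr_def KD_def k rn by (simp add: algebra_simps)
  have Bt: "beta3 n (V T) = - LBr n G + 2 * pi * of_int KB"
    unfolding beta3_def LBr_def KB_def k rn by (simp add: algebra_simps)
  have c1: "cong_2pi (beta3 n (V T)) (Delta3 n (V T))"
    unfolding cong_2pi_def
    by (rule exI[of _ "KB - KD"]) (simp add: D Bt GD GB algebra_simps)
  have c2: "cong_2pi (Delta3 n (V T)) (-8 * integral {0..T} A)"
    unfolding cong_2pi_def
    by (rule exI[of _ "KD"]) (simp add: D GD algebra_simps)
  show ?thesis using c1 c2 unfolding A_def by simp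
qed

end
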